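(* Let $S,T\subseteq\mathbb{Z}_{>0}$ be finite with $T\preceq S$. Then $T\triangleleft S\preceq S$.
   Context: For a finite set $S\subseteq\mathbb{Z}_{>0}$, $S(i)$ denotes its $i$th smallest element. $T\preceq S$ means $|T|\ge|S|$ and $T(i)<S(i)$ for all $i\in[|S|]$. For finite $S,T$, $T\triangleleft S$ is computed by going through $S$ from largest to smallest; each $s$ picks the largest element of $T$ less than $s$ not yet picked (if one exists); $T\triangleleft S$ is the set of picked elements. *)

theory Defs
  imports Main
begin

definition ith :: "nat set \<Rightarrow> nat \<Rightarrow> nat" where
  "ith S i = sorted_list_of_set S ! (i - 1)"

definition dominated :: "nat set \<Rightarrow> nat set \<Rightarrow> bool" where
  "dominated T S \<longleftrightarrow> card T \<ge> card S \<and> (\<forall>i\<in>{1..card S}. ith T i < ith S i)"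

fun greedy_pick :: "nat set \<Rightarrow> nat list \<Rightarrow> nat set" where
  "greedy_pick avail [] = {}"
| "greedy_pick avail (s # ss) =
     (if \<exists>t\<in>avail. t < s
      then (let t = Max {t\<in>avail. t < s} in insert t (greedy_pick (avail - {t}) ss))
      else greedy_pick avail ss)"

definition tri :: "nat set \<Rightarrow> nat set \<Rightarrow> nat set" where
  "tri T S = greedy_pick T (rev (sorted_list_of_set S))"

end

theory Submission
  imports Defs
begin

lemma card_lt_nth:
  fixes A :: "nat set"
  assumes "finite A" "j < card A"
  shows "card {a\<in>A. a < sorted_list_of_set A ! j} = j"
proof -
  define L where "L = sorted_list_of_set A"
  have sw: "sorted_wrt (<) L" unfolding L_def by simp
  have so: "sorted L" unfolding L_def by simp
  have d: "distinct L" unfolding L_def by simp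
  have len: "length L = card A" unfolding L_def by simp
  have sl: "set L = A" unfolding L_def using assms by simp
  have eq: "{a\<in>A. a < L ! j} = (!) L ` {..<j}"
  proof
    show "{a\<in>A. a < L ! j} \<subseteq> (!) L ` {..<j}"
    proof
      fix a assume a: "a \<in> {a\<in>A. a < L ! j}"
      then obtain i where i: "i < length L" "L ! i = a" using sl by (metis (lifting) in_set_conv_nth mem_Collect_eq)
      have "i < j"
      proof (rule ccontr)
        assume "\<not> i < j"
        then have "L ! j \<le> L ! i" using sorted_nth_mono[OF so, of j i] i by simp
        then show False using a i by simp
      qed
      then show "a \<in> (!) L ` {..<j}" using i by auto
    qed
    show "(!) L ` {..<j} \<subseteq> {a\<in>A. a < L ! j}"
      using sorted_wrt_nth_less[OF sw] assms len sl by auto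
  qed
  have "inj_on ((!) L) {..<j}" using inj_on_nth[OF d] assms len by auto
  then show ?thesis using eq card_image unfolding L_def by fastforce
qed

lemma card_le_nth:
  fixes A :: "nat set"
  assumes "finite A" "j < card A"
  shows "card {a\<in>A. a \<le> sorted_list_of_set A ! j} = Suc j"
proof -
  define x where "x = sorted_list_of_set A ! j"
  have xA: "x \<in> A" unfolding x_def using assms
    by (metis length_sorted_list_of_set nth_mem set_sorted_list_of_set)
  have "{a\<in>A. a \<le> x} = insert x {a\<in>A. a < x}" using xA by auto
  then have "card {a\<in>A. a \<le> x} = Suc (card {a\<in>A. a < x})" using assms(1) by simp
  then show ?thesis using card_lt_nth[OF assms] unfolding x_def by simp
qed

lemma dom_count:
  fixes S T :: "nat set"
  assumes "finite S" "finite T" "dominated T S"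
  shows "card {s\<in>S. s \<le> x} \<le> card {t\<in>T. t < x}"
proof -
  define k where "k = card {s\<in>S. s \<le> x}"
  define L where "L = sorted_list_of_set S"
  have so: "sorted L" unfolding L_def by simp
  have len: "length L = card S" unfolding L_def by simp
  have sl: "set L = S" unfolding L_def using assms by simp
  show ?thesis
  proof (cases "k = 0")
    case True then show ?thesis using k_def by linarith
  next
    case False
    have kS: "k \<le> card S" unfolding k_def using assms(1) by (intro card_mono) auto
    have Sk: "L ! (k - 1) \<le> x"
    proof (rule ccontr)
      assume c: "\<not> L ! (k - 1) \<le> x"
      have "{s\<in>S. s \<le> x} \<subseteq> (!) L ` {..<k-1}"
      proof
        fix s assume s: "s \<in> {s\<in>S. s \<le> x}"
        then obtain i where i: "i < length L" "L ! i = s" using sl by (metis (lifting) in_set_conv_nth mem_Collect_eq)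
        have "i < k - 1"
        proof (rule ccontr)
          assume "\<not> i < k - 1"
          then have "L ! (k-1) \<le> L ! i" using sorted_nth_mono[OF so, of "k-1" i] i by simp
          then show False using s i c by simp
        qed
        then show "s \<in> (!) L ` {..<k-1}" using i by auto
      qed
      then have "k \<le> card ((!) L ` {..<k-1})" unfolding k_def by (intro card_mono) auto
      also have "\<dots> \<le> k - 1" using card_image_le[of "{..<k-1}" "(!) L"] by simp
      finally show False using False by simp
    qed
    have "ith T k < ith S k" using assms(3) kS False unfolding dominated_def by auto
    then have lt: "sorted_list_of_set T ! (k-1) < x" using Sk unfolding ith_def L_def by simp
    have kT: "k - 1 < card T" using assms(3) kS False unfolding dominated_def by auto
    have "k = card {t\<in>T. t \<le> sorted_list_of_set T ! (k-1)}"
      using card_le_nth[OF assms(2) kT] False by simp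
    also have "\<dots> \<le> card {t\<in>T. t < x}" using lt assms(2) by (intro card_mono) auto
    finally show ?thesis unfolding k_def .
  qed
qed

lemma count_dom:
  fixes S T :: "nat set"
  assumes "finite S" "finite T" "card S \<le> card T"
    and cnt: "\<forall>x. card {s\<in>S. s \<le> x} \<le> card {t\<in>T. t < x}"
  shows "dominated T S"
  unfolding dominated_def
proof (intro conjI ballI)
  show "card S \<le> card T" by fact
  fix i assume i: "i \<in> {1..card S}"
  define x where "x = sorted_list_of_set S ! (i - 1)"
  have "card {s\<in>S. s \<le> x} = i" unfolding x_def using card_le_nth[OF assms(1), of "i-1"] i by auto
  then have ci: "i \<le> card {t\<in>T. t < x}" using cnt by metis
  show "ith T i < ith S i"
  proof (rule ccontr)
    assume "\<not> ith T i < ith S i"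
    then have c: "x \<le> sorted_list_of_set T ! (i-1)" unfolding ith_def x_def by simp
    have "card {t\<in>T. t < x} \<le> card {t\<in>T. t < sorted_list_of_set T ! (i-1)}"
      using c assms(2) by (intro card_mono) auto
    also have "\<dots> = i - 1" using card_lt_nth[OF assms(2), of "i-1"] i assms(3) by auto
    moreover have "1 \<le> i" using i by simp
    ultimately show False using ci by linarith
  qed
qed

lemma greedy:
  fixes A :: "nat set"
  assumes "finite A" "sorted_wrt (>) ss"
    and "\<forall>x. card {s\<in>set ss. s \<le> x} \<le> card {a\<in>A. a < x}"
  shows "greedy_pick A ss \<subseteq> A \<and> card (greedy_pick A ss) = length ss \<and>
         (\<forall>x. card {s\<in>set ss. s \<le> x} \<le> card {p\<in>greedy_pick A ss. p < x})"
  using assms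
proof (induction ss arbitrary: A)
  case Nil
  then show ?case by simp
next
  case (Cons s ss)
  have fin: "finite A" by fact
  have ssl: "\<forall>s'\<in>set ss. s' < s" using Cons.prems(2) by simp
  have snot: "s \<notin> set ss" using ssl by auto
  have inv: "\<And>x. card {s'\<in>set (s#ss). s' \<le> x} \<le> card {a\<in>A. a < x}" using Cons.prems(3) by blast
  have full: "\<And>x. card {s'\<in>set (s#ss). s' \<le> x} = card {s'\<in>set ss. s' \<le> x} + (if s \<le> x then 1 else 0)"
  proof -
    fix x
    show "card {s'\<in>set (s#ss). s' \<le> x} = card {s'\<in>set ss. s' \<le> x} + (if s \<le> x then 1 else 0)"
    proof (cases "s \<le> x")
      case True
      then have "{s'\<in>set (s#ss). s' \<le> x} = insert s {s'\<in>set ss. s' \<le> x}" by auto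
      then show ?thesis using True snot by simp
    next
      case False
      then have "{s'\<in>set (s#ss). s' \<le> x} = {s'\<in>set ss. s' \<le> x}" by auto
      then show ?thesis using False by simp
    qed
  qed
  have "1 \<le> card {a\<in>A. a < s}" using inv[of s] full[of s] by simp
  then have ex: "\<exists>t\<in>A. t < s" by (metis (lifting) Collect_empty_eq card.empty not_one_le_zero)
  define t where "t = Max {t\<in>A. t < s}"
  have ne: "{t\<in>A. t < s} \<noteq> {}" using ex by blast
  have fne: "finite {t\<in>A. t < s}" using fin by simp
  have tin: "t \<in> {t\<in>A. t < s}" unfolding t_def by (rule Max_in[OF fne ne])
  then have tA: "t \<in> A" and ts: "t < s" by auto
  have tmax: "\<And>a. a \<in> A \<Longrightarrow> a < s \<Longrightarrow> a \<le> t" unfolding t_def by (rule Max_ge[OF fne]) simp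
  have cA: "\<And>x. card {a\<in>A - {t}. a < x} = card {a\<in>A. a < x} - (if t < x then 1 else 0)"
  proof -
    fix x
    have fx: "finite {a\<in>A. a < x}" using fin by simp
    show "card {a\<in>A - {t}. a < x} = card {a\<in>A. a < x} - (if t < x then 1 else 0)"
    proof (cases "t < x")
      case True
      have e: "{a\<in>A - {t}. a < x} = {a\<in>A. a < x} - {t}" by blast
      have m: "t \<in> {a\<in>A. a < x}" using tA True by blast
      show ?thesis unfolding e using card_Diff_singleton[OF m] True by presburger
    next
      case False
      have e: "{a\<in>A - {t}. a < x} = {a\<in>A. a < x}" using False by blast
      show ?thesis unfolding e using False by presburger
    qed
  qed
  have cApos: "\<And>x. t < x \<Longrightarrow> 1 \<le> card {a\<in>A. a < x}"
  proof -
    fix x assume "t < x"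
    then have m: "t \<in> {a\<in>A. a < x}" using tA by blast
    have fx: "finite {a\<in>A. a < x}" using fin by simp
    have "0 < card {a\<in>A. a < x}" using card_gt_0_iff fx m by blast
    then show "1 \<le> card {a\<in>A. a < x}" by simp
  qed
  have inv': "\<forall>x. card {s'\<in>set ss. s' \<le> x} \<le> card {a\<in>A - {t}. a < x}"
  proof
    fix x
    show "card {s'\<in>set ss. s' \<le> x} \<le> card {a\<in>A - {t}. a < x}"
    proof (cases "x \<le> t")
      case True
      then show ?thesis using cA[of x] inv[of x] full[of x] by simp
    next
      case False
      note tx = this
      show ?thesis
      proof (cases "x \<le> s")
        case True
        have m: "card {s'\<in>set ss. s' \<le> x} \<le> card {s'\<in>set ss. s' \<le> s}"
          by (intro card_mono) (use True in auto)
        have e: "{a\<in>A. a < s} = {a\<in>A. a < x}" using tmax tx True by fastforce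
        show ?thesis using m e cA[of x] inv[of s] full[of s] tx cApos[of x] by simp
      next
        case False
        then show ?thesis using cA[of x] inv[of x] full[of x] tx cApos[of x] by simp
      qed
    qed
  qed
  have IH: "greedy_pick (A - {t}) ss \<subseteq> A - {t} \<and> card (greedy_pick (A - {t}) ss) = length ss \<and>
         (\<forall>x. card {s\<in>set ss. s \<le> x} \<le> card {p\<in>greedy_pick (A - {t}) ss. p < x})"
    using Cons.IH[of "A - {t}"] fin Cons.prems(2) inv' by simp
  define P where "P = greedy_pick (A - {t}) ss"
  have gp: "greedy_pick A (s # ss) = insert t P" using ex unfolding P_def t_def by (simp add: Let_def)
  have finP: "finite P" using IH fin unfolding P_def by (meson finite_Diff finite_subset)
  have tP: "t \<notin> P" using IH unfolding P_def by auto
  have cP: "\<And>x. card {p\<in>insert t P. p < x} = card {p\<in>P. p < x} + (if t < x then 1 else 0)"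
  proof -
    fix x
    show "card {p\<in>insert t P. p < x} = card {p\<in>P. p < x} + (if t < x then 1 else 0)"
    proof (cases "t < x")
      case True
      then have "{p\<in>insert t P. p < x} = insert t {p\<in>P. p < x}" by auto
      then show ?thesis using True tP finP by simp
    next
      case False
      then have "{p\<in>insert t P. p < x} = {p\<in>P. p < x}" by auto
      then show ?thesis using False by simp
    qed
  qed
  show ?case
  proof (intro conjI allI)
    show "greedy_pick A (s # ss) \<subseteq> A" using gp IH tA unfolding P_def by auto
    show "card (greedy_pick A (s # ss)) = length (s # ss)" using gp IH tP finP unfolding P_def by simp
    fix x
    have "card {s'\<in>set ss. s' \<le> x} \<le> card {p\<in>P. p < x}" using IH unfolding P_def by blast
    then show "card {s'\<in>set (s # ss). s' \<le> x} \<le> card {p\<in>greedy_pick A (s # ss). p < x}"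
      using full[of x] cP[of x] gp ts by auto
  qed
qed

theorem corollary4p8:
  fixes S T :: "nat set"
  assumes "finite S" and "finite T"
    and "\<forall>x\<in>S. 0 < x" and "\<forall>x\<in>T. 0 < x"
    and "dominated T S"
  shows "dominated (tri T S) S"
proof -
  define ss where "ss = rev (sorted_list_of_set S)"
  have sw: "sorted_wrt (>) ss" unfolding ss_def by (simp add: sorted_wrt_rev)
  have sset: "set ss = S" unfolding ss_def using assms(1) by simp
  have len: "length ss = card S" unfolding ss_def by simp
  have inv: "\<forall>x. card {s\<in>set ss. s \<le> x} \<le> card {a\<in>T. a < x}"
    using dom_count[OF assms(1,2,5)] sset by simp
  have g: "greedy_pick T ss \<subseteq> T \<and> card (greedy_pick T ss) = length ss \<and>
         (\<forall>x. card {s\<in>set ss. s \<le> x} \<le> card {p\<in>greedy_pick T ss. p < x})"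
    using greedy[OF assms(2) sw inv] .
  have fin: "finite (tri T S)" using g assms(2) unfolding tri_def ss_def by (meson finite_subset)
  show ?thesis
    using count_dom[OF assms(1) fin] g sset len unfolding tri_def ss_def by simp
qed

end
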